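(* Let $0<\alpha\le 2$, $2\le\beta<4$, $\gamma\ge 1$, and let $\mu$ be a positive Borel measure on $[0,1)$ such that $\mu_n=\int_{[0,1)}t^n\,d\mu(t)=\mathcal{O}\big(n^{-(\frac{\alpha}{2}+\varepsilon)}\big)$ for some $\varepsilon>0$. Then the following are equivalent: (i) $\mu$ is a $\big(\gamma-\frac{\beta-\alpha}{2}\big)$-Carleson measure, i.e. $\sup_{t\in[0,1)}\frac{\mu([t,1))}{(1-t)^{\gamma-\frac{\beta-\alpha}{2}}}<\infty$; (ii) the operator $\mathcal{H}_{\mu,\gamma}$ is bounded from $\mathcal{D}_\alpha$ into $\mathcal{D}_\beta$.
   Context: $\mathbb{D}$ is the open unit disc. For $\alpha\in\mathbb{R}$, the Dirichlet-type space $\mathcal{D}_\alpha$ consists of analytic $f(z)=\sum_{n\ge0}a_nz^n$ on $\mathbb{D}$ with $\|f\|_{\mathcal{D}_\alpha}^2=\sum_{n=0}^\infty (n+1)^{1-\alpha}|a_n|^2<\infty$. For a positive Borel measure $\mu$ on $[0,1)$ and $\gamma>0$, the generalized Hilbert operator is defined on analytic $f(z)=\sum_k a_kz^k$ by $\mathcal{H}_{\mu,\gamma}(f)(z)=\sum_{n=0}^\infty\Big(\sum_{k=0}^\infty \mu_{n+k}a_k\Big)\frac{\Gamma(n+\gamma)}{n!\,\Gamma(\gamma)}z^n$, where $\mu_j=\int_{[0,1)}t^j\,d\mu(t)$ (under the stated moment decay, the inner series converge for $f\in\mathcal{D}_\alpha$). A positive Borel measure $\mu$ on $[0,1)$ is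 called an $s$-Carleson measure if $\sup_{t\in[0,1)}\mu([t,1))/(1-t)^s<\infty$. *)

theory Defs
  imports "HOL-Analysis.Analysis" "HOL-Library.Landau_Symbols"
begin

text \<open>Analytic functions on the unit disc are represented by their Taylor
coefficient sequences \<open>a :: nat \<Rightarrow> complex\<close>, f(z) = sum a n z^n.\<close>

definition D_normsq :: "real \<Rightarrow> (nat \<Rightarrow> complex) \<Rightarrow> real" where
  "D_normsq \<alpha> a = (\<Sum>n. (real n + 1) powr (1 - \<alpha>) * (cmod (a n))\<^sup>2)"

definition in_D :: "real \<Rightarrow> (nat \<Rightarrow> complex) \<Rightarrow> bool" where
  "in_D \<alpha> a \<longleftrightarrow> summable (\<lambda>n. (real n + 1) powr (1 - \<alpha>) * (cmod (a n))\<^sup>2)"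

definition D_norm :: "real \<Rightarrow> (nat \<Rightarrow> complex) \<Rightarrow> real" where
  "D_norm \<alpha> a = sqrt (D_normsq \<alpha> a)"

definition moment :: "real measure \<Rightarrow> nat \<Rightarrow> real" where
  "moment M j = (LINT t|M. t ^ j)"

definition borel_measure_01 :: "real measure \<Rightarrow> bool" where
  "borel_measure_01 M \<longleftrightarrow> sets M = sets (restrict_space borel {0..<1}) \<and> finite_measure M"

definition carleson :: "real \<Rightarrow> real measure \<Rightarrow> bool" where
  "carleson s M \<longleftrightarrow> bdd_above ((\<lambda>t. measure M {t..<1} / (1 - t) powr s) ` {0..<1})"

definition Hilbert_op :: "real measure \<Rightarrow> real \<Rightarrow> (nat \<Rightarrow> complex) \<Rightarrow> nat \<Rightarrow> complex" where
  "Hilbert_op M \<gamma> a n =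
     (\<Sum>k. complex_of_real (moment M (n + k)) * a k) *
     complex_of_real (Gamma (real n + \<gamma>) / (fact n * Gamma \<gamma>))"

definition Hilbert_bounded :: "real measure \<Rightarrow> real \<Rightarrow> real \<Rightarrow> real \<Rightarrow> bool" where
  "Hilbert_bounded M \<gamma> \<alpha> \<beta> \<longleftrightarrow>
     (\<exists>C. \<forall>a. in_D \<alpha> a \<longrightarrow>
        (\<forall>n. summable (\<lambda>k. complex_of_real (moment M (n + k)) * a k)) \<and>
        in_D \<beta> (Hilbert_op M \<gamma> a) \<and>
        D_norm \<beta> (Hilbert_op M \<gamma> a) \<le> C * D_norm \<alpha> a)"

end

theory Submission
  imports Defs "HOL-Real_Asymp.Real_Asymp"
begin


definition wgt :: "real \<Rightarrow> nat \<Rightarrow> real" where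
  "wgt g n = Gamma (real n + g) / (fact n * Gamma g)"

lemma wgt_pos: "g > 0 \<Longrightarrow> wgt g n > 0"
  unfolding wgt_def by (intro divide_pos_pos mult_pos_pos Gamma_real_pos) auto

lemma wgt_poch: assumes "g > 0" shows "wgt g n = pochhammer g n / fact n"
proof -
  have "g \<notin> \<int>\<^sub>\<le>\<^sub>0" using assms by (auto elim!: nonpos_Ints_cases)
  then show ?thesis unfolding wgt_def using pochhammer_Gamma[of g n]
    by (simp add: add.commute)
qed

lemma wgt_lim: assumes "g > 0"
  shows "(\<lambda>n. wgt g n / (real n + 1) powr (g - 1)) \<longlonglongrightarrow> 1 / Gamma g"
proof -
  have A: "(\<lambda>n. real n powr g * (real n+1) powr (1-g) / (g + real n)) \<longlonglongrightarrow> 1"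
    by real_asymp
  have B: "(\<lambda>n. (real n powr g * (real n+1) powr (1-g) / (g + real n)) / Gamma_series g n) \<longlonglongrightarrow> 1 / Gamma g"
    by (rule tendsto_divide[OF A Gamma_series_LIMSEQ]) (use assms Gamma_real_pos[of g] in linarith)
  show ?thesis
  proof (rule Lim_transform_eventually[OF B])
    show "\<forall>\<^sub>F n in sequentially. (real n powr g * (real n+1) powr (1-g) / (g + real n)) / Gamma_series g n = wgt g n / (real n + 1) powr (g - 1)"
      using eventually_gt_at_top[of "0::nat"]
    proof eventually_elim
      case (elim n)
      have p: "pochhammer g n > 0" using assms by (intro pochhammer_pos) 
      have e: "exp (g * ln (real n)) = real n powr g" using elim by (simp add: powr_def mult.commute)
      have "Gamma_series g n = fact n * real n powr g / (pochhammer g n * (g + real n))"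
        unfolding Gamma_series_def using e by (simp add: pochhammer_Suc)
      moreover have "(real n+1) powr (1-g) = 1 / (real n + 1) powr (g - 1)"
        by (simp add: powr_diff powr_minus_divide)
      moreover have "real n powr g > 0" "(fact n::real) > 0" "g + real n > 0" using elim assms by auto
      moreover have aux: "\<And>X D F P Y. X>0 \<Longrightarrow> D>0 \<Longrightarrow> F>0 \<Longrightarrow> P>0 \<Longrightarrow> (X*Y/D)/(F*X/(P*D)) = Y*P/(F::real)"
        by (simp add: field_simps)
      ultimately show ?case using p 
        by (simp add: wgt_poch[OF assms] aux[of _ "g + real n" "fact n" "pochhammer g n"] mult.commute)
    qed
  qed
qed

lemma pos_conv_bounds:
  fixes r :: "nat \<Rightarrow> real"
  assumes "r \<longlonglongrightarrow> L" "L > 0" "\<And>n. r n > 0"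
  shows "\<exists>c C. c > 0 \<and> (\<forall>n. c \<le> r n \<and> r n \<le> C)"
proof -
  have "Bseq r" using assms(1) by (rule convergent_imp_Bseq[OF convergentI])
  then obtain K where K: "\<And>n. norm (r n) \<le> K" unfolding Bseq_def by blast
  have "(\<lambda>n. inverse (r n)) \<longlonglongrightarrow> inverse L" using assms by (intro tendsto_intros) auto
  hence "Bseq (\<lambda>n. inverse (r n))" by (rule convergent_imp_Bseq[OF convergentI])
  then obtain K' where K': "K' > 0" "\<And>n. norm (inverse (r n)) \<le> K'" unfolding Bseq_def by blast
  have "\<forall>n. 1/K' \<le> r n \<and> r n \<le> K"
  proof
    fix n
    have "inverse (r n) \<le> K'" using K'(2)[of n] assms(3)[of n] by simp
    hence "1/K' \<le> r n" using assms(3)[of n] K'(1) by (simp add: field_simps)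
    moreover have "r n \<le> K" using K[of n] by simp
    ultimately show "1/K' \<le> r n \<and> r n \<le> K" by simp
  qed
  thus ?thesis using K'(1) by (intro exI[of _ "1/K'"] exI[of _ K]) auto
qed

lemma wgt_bounds:
  assumes "g > 0"
  shows "\<exists>c C. c > 0 \<and> (\<forall>n. c * (real n + 1) powr (g - 1) \<le> wgt g n \<and> wgt g n \<le> C * (real n + 1) powr (g - 1))"
proof -
  have "\<exists>c C. c > 0 \<and> (\<forall>n. c \<le> wgt g n / (real n + 1) powr (g - 1) \<and> wgt g n / (real n + 1) powr (g - 1) \<le> C)"
    by (rule pos_conv_bounds[OF wgt_lim[OF assms]]) (use assms wgt_pos[OF assms] Gamma_real_pos[OF assms] in auto)
  then obtain c C where cC: "c > 0" "\<And>n. c \<le> wgt g n / (real n + 1) powr (g - 1) \<and> wgt g n / (real n + 1) powr (g - 1) \<le> C"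
    by blast
  have "\<forall>n. c * (real n + 1) powr (g - 1) \<le> wgt g n \<and> wgt g n \<le> C * (real n + 1) powr (g - 1)"
  proof
    fix n
    have p: "(real n + 1) powr (g - 1) > 0" by simp
    from cC(2)[of n] p show "c * (real n + 1) powr (g - 1) \<le> wgt g n \<and> wgt g n \<le> C * (real n + 1) powr (g - 1)"
      by (simp add: field_simps)
  qed
  thus ?thesis using cC(1) by blast
qed

lemma step_low:
  fixes k :: nat and a :: real
  assumes "0 < a" "a < 1"
  shows "a * (real k + 1) powr (a - 1) \<le> (real k + 1) powr a - real k powr a"
proof (cases "k = 0")
  case True thus ?thesis using assms by simp
next
  case False
  have "\<exists>z. real k < z \<and> z < real k + 1 \<and> (real k + 1) powr a - real k powr a = (real k + 1 - real k) * (a * z powr (a - 1))"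
    by (rule MVT2) (use False in \<open>auto intro!: has_real_derivative_powr\<close>)
  then obtain z where z: "real k < z" "z < real k + 1" "(real k + 1) powr a - real k powr a = a * z powr (a - 1)" by auto
  have "(real k + 1) powr (a - 1) \<le> z powr (a - 1)"
    using z False assms by (intro powr_mono2') auto
  thus ?thesis using z assms by simp
qed

lemma step_high:
  fixes k :: nat and c :: real
  assumes "0 < c"
  shows "c * (real k + 2) powr (- c - 1) \<le> (real k + 1) powr (- c) - (real k + 2) powr (- c)"
proof -
  have "\<exists>z. real k + 1 < z \<and> z < real k + 2 \<and> (real k + 2) powr (-c) - (real k + 1) powr (-c) = (real k + 2 - (real k + 1)) * (-c * z powr (-c - 1))"
  proof (rule MVT2)
    fix x assume "real k + 1 \<le> x" "x \<le> real k + 2"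
    then show "((\<lambda>x. x powr (-c)) has_real_derivative (-c * x powr (-c - 1))) (at x)"
      using has_real_derivative_powr[of x "-c"] by simp
  qed simp
  then obtain z where z: "real k + 1 < z" "z < real k + 2" "(real k + 2) powr (-c) - (real k + 1) powr (-c) = -c * z powr (-c - 1)" by auto
  have "(real k + 2) powr (-c - 1) \<le> z powr (-c - 1)"
    using z assms by (intro powr_mono2') auto
  hence "c * (real k + 2) powr (-c - 1) \<le> c * z powr (-c - 1)"
    using assms by (intro mult_left_mono) auto
  thus ?thesis using z by linarith
qed

lemma psum_low:
  assumes "a > 0"
  shows "\<exists>C>0. \<forall>N. (\<Sum>k<N. (real k + 1) powr (a - 1)) \<le> C * real N powr a"
proof (cases "a \<ge> 1")
  case True
  have "(\<Sum>k<N. (real k + 1) powr (a - 1)) \<le> 1 * real N powr a" for N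
  proof -
    have "(\<Sum>k<N. (real k + 1) powr (a - 1)) \<le> (\<Sum>k<N. real N powr (a - 1))"
      by (intro sum_mono powr_mono2) (use True in auto)
    also have "\<dots> = real N powr a"
      by (cases "N = 0") (simp_all add: powr_diff field_simps)
    finally show ?thesis by simp
  qed
  thus ?thesis by (intro exI[of _ 1]) auto
next
  case False
  have "(\<Sum>k<N. (real k + 1) powr (a - 1)) \<le> (1/a) * real N powr a" for N
  proof (induction N)
    case 0 thus ?case using assms by simp
  next
    case (Suc N)
    have st: "(real N + 1) powr (a - 1) \<le> (1/a) * (real N + 1) powr a - (1/a) * real N powr a"
      using step_low[of a N] assms False by (simp add: field_simps)
    have "(\<Sum>k<Suc N. (real k + 1) powr (a - 1)) = (\<Sum>k<N. (real k + 1) powr (a - 1)) + (real N + 1) powr (a - 1)" by simp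
    also have "\<dots> \<le> (1/a) * (real N + 1) powr a" using Suc st by linarith
    finally show ?case by (simp add: add.commute)
  qed
  thus ?thesis using assms by (intro exI[of _ "1/a"]) auto
qed

lemma psum_tail:
  assumes "c > 0"
  shows "(\<Sum>j<N. (real j + real n + 2) powr (- c - 1)) \<le> (1/c) * (real n + 1) powr (- c)"
proof -
  have "(\<Sum>j<N. (real j + real n + 2) powr (- c - 1)) \<le> (1/c) * (real n + 1) powr (- c) - (1/c) * (real N + real n + 1) powr (- c)"
  proof (induction N)
    case 0 thus ?case by simp
  next
    case (Suc N)
    have st: "(real N + real n + 2) powr (- c - 1) \<le> (1/c) * (real N + real n + 1) powr (-c) - (1/c) * (real N + real n + 2) powr (-c)"
      using step_high[of c "N + n"] assms by (simp add: field_simps)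
    have "(\<Sum>j<Suc N. (real j + real n + 2) powr (- c - 1)) = (\<Sum>j<N. (real j + real n + 2) powr (- c - 1)) + (real N + real n + 2) powr (- c - 1)" by simp
    also have "\<dots> \<le> (1/c) * (real n + 1) powr (- c) - (1/c) * (real N + real n + 2) powr (- c)" using Suc st by linarith
    finally show ?case by (simp add: add_ac)
  qed
  also have "\<dots> \<le> (1/c) * (real n + 1) powr (- c)" using assms by simp
  finally show ?thesis .
qed

lemma sum_split_shift:
  fixes f :: "nat \<Rightarrow> 'a::comm_monoid_add" and m N :: nat
  shows "(\<Sum>k<m+N. f k) = (\<Sum>k<m. f k) + (\<Sum>j<N. f (m + j))"
  by (induction N) (simp_all add: add_ac)

lemma sum_le_split:
  fixes f :: "nat \<Rightarrow> real"
  assumes "\<And>k. f k \<ge> 0"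
  shows "(\<Sum>k<N. f k) \<le> (\<Sum>k<m. f k) + (\<Sum>j<N. f (m + j))"
proof -
  have "(\<Sum>k<N. f k) \<le> (\<Sum>k<m+N. f k)"
    by (intro sum_mono2) (use assms in auto)
  thus ?thesis by (simp add: sum_split_shift)
qed

lemma L3:
  assumes "0 < a" "a < s"
  shows "\<exists>C>0. \<forall>n N. (\<Sum>k<N. (real k + 1) powr (a - 1) * (real n + real k + 1) powr (- s)) \<le> C * (real n + 1) powr (a - s)"
proof -
  obtain C1 where C1: "C1 > 0" "\<And>N. (\<Sum>k<N. (real k + 1) powr (a - 1)) \<le> C1 * real N powr a"
    using psum_low[OF assms(1)] by blast
  define C where "C = C1 + 1 / (s - a)"
  have "(\<Sum>k<N. (real k + 1) powr (a - 1) * (real n + real k + 1) powr (- s)) \<le> C * (real n + 1) powr (a - s)" for n N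
  proof -
    let ?f = "\<lambda>k. (real k + 1) powr (a - 1) * (real n + real k + 1) powr (- s)"
    have "(\<Sum>k<N. ?f k) \<le> (\<Sum>k<Suc n. ?f k) + (\<Sum>j<N. ?f (Suc n + j))"
      by (rule sum_le_split) simp
    also have "(\<Sum>k<Suc n. ?f k) \<le> (\<Sum>k<Suc n. (real k + 1) powr (a - 1) * (real n + 1) powr (- s))"
    proof (intro sum_mono mult_left_mono)
      fix k show "(real n + real k + 1) powr (- s) \<le> (real n + 1) powr (- s)"
        using assms by (intro powr_mono2') auto
    qed simp
    also have "\<dots> = (\<Sum>k<Suc n. (real k + 1) powr (a - 1)) * (real n + 1) powr (- s)"
      by (rule sum_distrib_right[symmetric])
    also have "\<dots> \<le> (C1 * real (Suc n) powr a) * (real n + 1) powr (- s)"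
      by (intro mult_right_mono C1) simp
    also have "\<dots> = C1 * (real n + 1) powr (a - s)"
      by (simp add: powr_diff powr_minus field_simps add.commute)
    also have "(\<Sum>j<N. ?f (Suc n + j)) \<le> (\<Sum>j<N. (real j + real n + 2) powr (- (s - a) - 1))"
    proof (intro sum_mono)
      fix j
      have "?f (Suc n + j) = (real j + real n + 2) powr (a - 1) * (real j + 2 * real n + 2) powr (- s)"
        by (simp add: algebra_simps)
      also have "\<dots> \<le> (real j + real n + 2) powr (a - 1) * (real j + real n + 2) powr (- s)"
        using assms by (intro mult_left_mono powr_mono2') auto
      also have "\<dots> = (real j + real n + 2) powr (- (s - a) - 1)"
        by (simp add: powr_add[symmetric] algebra_simps)
      finally show "?f (Suc n + j) \<le> (real j + real n + 2) powr (- (s - a) - 1)" .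
    qed
    also have "\<dots> \<le> (1 / (s - a)) * (real n + 1) powr (- (s - a))"
      by (rule psum_tail) (use assms in simp)
    finally show ?thesis unfolding C_def by (simp add: algebra_simps)
  qed
  moreover have "1 / (s - a) > 0" using assms by simp
  hence "C > 0" unfolding C_def using C1(1) by linarith
  ultimately show ?thesis by blast
qed

lemma schur_finite:
  fixes K :: "nat \<Rightarrow> nat \<Rightarrow> real"
  assumes fin: "finite A" "finite B"
    and K: "\<And>n k. K n k \<ge> 0" and p: "\<And>n. p n > 0" and q: "\<And>k. q k > 0"
    and C: "C1 \<ge> 0" "C2 \<ge> 0"
    and row: "\<And>n. (\<Sum>k\<in>B. K n k * q k) \<le> C1 * p n"
    and col: "\<And>k. (\<Sum>n\<in>A. K n k * p n) \<le> C2 * q k"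
  shows "(\<Sum>n\<in>A. (\<Sum>k\<in>B. K n k * x k)\<^sup>2) \<le> C1 * C2 * (\<Sum>k\<in>B. (x k)\<^sup>2)"
proof -
  have cs: "(\<Sum>k\<in>B. K n k * x k)\<^sup>2 \<le> C1 * p n * (\<Sum>k\<in>B. K n k * (x k)\<^sup>2 / q k)" for n
  proof -
    have "(\<Sum>k\<in>B. K n k * x k) = (\<Sum>k\<in>B. sqrt (K n k * q k) * (sqrt (K n k / q k) * x k))"
    proof (intro sum.cong refl)
      fix k
      have "sqrt (K n k * q k) * sqrt (K n k / q k) = K n k"
        using K[of n k] q[of k] by (simp add: real_sqrt_mult[symmetric])
      thus "K n k * x k = sqrt (K n k * q k) * (sqrt (K n k / q k) * x k)" by (simp add: mult.assoc[symmetric])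
    qed
    also have "(\<dots>)\<^sup>2 \<le> (\<Sum>k\<in>B. (sqrt (K n k * q k))\<^sup>2) * (\<Sum>k\<in>B. (sqrt (K n k / q k) * x k)\<^sup>2)"
      by (rule Cauchy_Schwarz_ineq_sum)
    also have "(\<Sum>k\<in>B. (sqrt (K n k * q k))\<^sup>2) = (\<Sum>k\<in>B. K n k * q k)"
    proof (intro sum.cong refl)
      fix k show "(sqrt (K n k * q k))\<^sup>2 = K n k * q k" using K[of n k] q[of k] by simp
    qed
    also have "(\<Sum>k\<in>B. (sqrt (K n k / q k) * x k)\<^sup>2) = (\<Sum>k\<in>B. K n k * (x k)\<^sup>2 / q k)"
    proof (intro sum.cong refl)
      fix k show "(sqrt (K n k / q k) * x k)\<^sup>2 = K n k * (x k)\<^sup>2 / q k"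
        using K[of n k] q[of k] by (simp add: power_mult_distrib)
    qed
    also have "(\<Sum>k\<in>B. K n k * q k) * (\<Sum>k\<in>B. K n k * (x k)\<^sup>2 / q k) \<le> C1 * p n * (\<Sum>k\<in>B. K n k * (x k)\<^sup>2 / q k)"
      by (intro mult_right_mono row sum_nonneg) (use K q in \<open>auto intro!: divide_nonneg_pos\<close>)
    finally show ?thesis .
  qed
  have "(\<Sum>n\<in>A. (\<Sum>k\<in>B. K n k * x k)\<^sup>2) \<le> (\<Sum>n\<in>A. C1 * p n * (\<Sum>k\<in>B. K n k * (x k)\<^sup>2 / q k))"
    by (intro sum_mono cs)
  also have "\<dots> = (\<Sum>k\<in>B. \<Sum>n\<in>A. C1 * p n * (K n k * (x k)\<^sup>2 / q k))"
    by (subst sum.swap) (simp add: sum_distrib_left)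
  also have "\<dots> = C1 * (\<Sum>k\<in>B. (x k)\<^sup>2 / q k * (\<Sum>n\<in>A. K n k * p n))"
    by (simp add: sum_distrib_left mult_ac sum_divide_distrib)
  also have "\<dots> \<le> C1 * (\<Sum>k\<in>B. (x k)\<^sup>2 / q k * (C2 * q k))"
    by (intro mult_left_mono sum_mono col C) (use q in \<open>auto intro!: divide_nonneg_pos\<close>)
  also have "\<dots> = C1 * C2 * (\<Sum>k\<in>B. (x k)\<^sup>2)"
    using q by (simp add: sum_distrib_left mult_ac less_imp_neq[symmetric])
  finally show ?thesis .
qed

lemma bm_space: "borel_measure_01 M \<Longrightarrow> space M = {0..<1}"
  unfolding borel_measure_01_def by (auto dest!: sets_eq_imp_space_eq simp: space_restrict_space)

lemma bm_finite: "borel_measure_01 M \<Longrightarrow> finite_measure M"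
  unfolding borel_measure_01_def by auto

lemma bm_sets: assumes "borel_measure_01 M" "0 \<le> t" shows "{t..<1} \<in> sets M"
proof -
  have "sets M = sets (restrict_space borel {0..<1::real})" using assms unfolding borel_measure_01_def by auto
  moreover have "{t..<1} \<in> sets (restrict_space borel {0..<1::real})"
    using assms(2) by (subst sets_restrict_space_iff) auto
  ultimately show ?thesis by simp
qed

lemma bm_meas: assumes "borel_measure_01 M" "f \<in> borel_measurable borel"
  shows "f \<in> borel_measurable M"
proof -
  have S: "sets M = sets (restrict_space borel {0..<1::real})" using assms unfolding borel_measure_01_def by auto
  show ?thesis
    by (subst measurable_cong_sets[OF S refl]) (rule measurable_restrict_space1[OF assms(2)])
qed

lemma bm_integrable_pow: assumes "borel_measure_01 M" shows "integrable M (\<lambda>t. t ^ j)"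
proof -
  interpret finite_measure M using bm_finite[OF assms] .
  show ?thesis
  proof (rule integrable_const_bound[where B=1])
    show "AE x in M. norm (x ^ j) \<le> 1" using bm_space[OF assms]
      by (intro AE_I2) (auto simp: power_abs intro!: power_le_one)
    show "(\<lambda>t. t ^ j) \<in> borel_measurable M" by (rule bm_meas[OF assms]) simp
  qed
qed

lemma bm_emeasure_fin: assumes "borel_measure_01 M" shows "emeasure M A < \<infinity>"
proof -
  interpret finite_measure M using bm_finite[OF assms] .
  show ?thesis by (simp add: less_top[symmetric])
qed

lemma moment_nonneg: assumes "borel_measure_01 M" shows "moment M j \<ge> 0"
  unfolding moment_def using bm_space[OF assms] by (intro Bochner_Integration.integral_nonneg) auto

lemma moment_le_total: assumes "borel_measure_01 M" shows "moment M j \<le> measure M (space M)"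
proof -
  interpret finite_measure M using bm_finite[OF assms] .
  have "moment M j \<le> (LINT t|M. 1)" unfolding moment_def
    by (intro Bochner_Integration.integral_mono bm_integrable_pow[OF assms])
       (use bm_space[OF assms] in \<open>auto simp: power_le_one\<close>)
  thus ?thesis by simp
qed

lemma moment_ge: assumes "borel_measure_01 M" "0 \<le> t" "t < 1"
  shows "t ^ j * measure M {t..<1} \<le> moment M j"
proof -
  have A: "{t..<1} \<in> sets M" by (rule bm_sets[OF assms(1,2)])
  have "(LINT u|M. t ^ j * indicator {t..<1} u) \<le> moment M j" unfolding moment_def
  proof (intro Bochner_Integration.integral_mono bm_integrable_pow[OF assms(1)])
    show "integrable M (\<lambda>u. t ^ j * indicator {t..<1} u)"
      using A bm_emeasure_fin[OF assms(1)] by (intro integrable_mult_right) auto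
    fix u assume "u \<in> space M"
    thus "t ^ j * indicator {t..<1} u \<le> u ^ j" using assms(2) bm_space[OF assms(1)] by (auto simp: indicator_def power_mono)
  qed
  moreover have "(LINT u|M. t ^ j * indicator {t..<1} u) = t ^ j * measure M {t..<1}"
  proof -
    have sp: "{t..<1} \<inter> space M = {t..<1}" using bm_space[OF assms(1)] assms(2) by auto
    show ?thesis by (simp only: integral_mult_right_zero Bochner_Integration.integral_indicator sp)
  qed
  ultimately show ?thesis by linarith
qed

definition tt :: "nat \<Rightarrow> real" where "tt j = 1 - (1/2)^j"

lemma tt_0[simp]: "tt 0 = 0" by (simp add: tt_def)
lemma tt_nonneg: "0 \<le> tt j" by (simp add: tt_def power_le_one)
lemma tt_less1: "tt j < 1" by (simp add: tt_def)
lemma tt_mono: "tt j \<le> tt (Suc j)" by (simp add: tt_def)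

lemma pointwise_layer:
  assumes "0 \<le> u" "u < 1"
  shows "u ^ m \<le> (\<Sum>j<J. tt (Suc j) ^ m * indicator {tt j..<1} u) + indicator {tt J..<1} u"
proof (induction J)
  case 0 thus ?case using assms by (simp add: indicator_def power_le_one)
next
  case (Suc J)
  have S: "(\<Sum>j<J. tt (Suc j) ^ m * indicator {tt j..<1} u) \<ge> 0"
    by (intro sum_nonneg mult_nonneg_nonneg zero_le_power tt_nonneg) auto
  show ?case
  proof (cases "u < tt J")
    case True
    hence "u < tt (Suc J)" using tt_mono[of J] by linarith
    with True Suc show ?thesis by (simp add: indicator_def)
  next
    case False
    show ?thesis
    proof (cases "u < tt (Suc J)")
      case True
      have "u ^ m \<le> tt (Suc J) ^ m" using True assms by (intro power_mono) auto
      thus ?thesis using False True S assms by (simp add: indicator_def)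
    next
      case False2: False
      have "u ^ m \<le> 1" using assms by (simp add: power_le_one)
      moreover have "tt (Suc J) ^ m * indicator {tt J..<1} u \<ge> 0"
        using tt_nonneg[of "Suc J"] by (simp add: indicator_def)
      ultimately show ?thesis using False2 S assms by (simp add: indicator_def)
    qed
  qed
qed

lemma moment_layer:
  assumes "borel_measure_01 M"
  shows "moment M m \<le> (\<Sum>j<J. tt (Suc j) ^ m * measure M {tt j..<1}) + measure M {tt J..<1}"
proof -
  have A: "\<And>j. {tt j..<1} \<in> sets M" by (rule bm_sets[OF assms tt_nonneg])
  have I: "\<And>j. integrable M (indicator {tt j..<1} :: real \<Rightarrow> real)"
    using A bm_emeasure_fin[OF assms] by auto
  have ms: "\<And>j. measure M ({tt j..<1} \<inter> space M) = measure M {tt j..<1}"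
    using A sets.sets_into_space by (metis Int_absorb2)
  have "moment M m \<le> (LINT u|M. (\<Sum>j<J. tt (Suc j) ^ m * indicator {tt j..<1} u) + indicator {tt J..<1} u)"
    unfolding moment_def
  proof (intro Bochner_Integration.integral_mono bm_integrable_pow[OF assms])
    show "integrable M (\<lambda>u. (\<Sum>j<J. tt (Suc j) ^ m * indicator {tt j..<1} u) + indicator {tt J..<1} u)"
      using I by (intro Bochner_Integration.integrable_add Bochner_Integration.integrable_sum integrable_mult_right) auto
    fix u assume "u \<in> space M"
    thus "u ^ m \<le> (\<Sum>j<J. tt (Suc j) ^ m * indicator {tt j..<1} u) + indicator {tt J..<1} u"
      using bm_space[OF assms] by (intro pointwise_layer) auto
  qed
  also have "\<dots> = (\<Sum>j<J. tt (Suc j) ^ m * measure M {tt j..<1}) + measure M {tt J..<1}"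
  proof -
    have i2: "\<And>j. integrable M (\<lambda>u. tt (Suc j) ^ m * indicator {tt j..<1} u)"
      using I by (intro integrable_mult_right) auto
    have i1: "integrable M (\<lambda>u. \<Sum>j<J. tt (Suc j) ^ m * indicator {tt j..<1} u)"
      using i2 by (intro Bochner_Integration.integrable_sum) auto
    have "(LINT u|M. (\<Sum>j<J. tt (Suc j) ^ m * indicator {tt j..<1} u) + indicator {tt J..<1} u)
        = (LINT u|M. (\<Sum>j<J. tt (Suc j) ^ m * indicator {tt j..<1} u)) + (LINT u|M. indicator {tt J..<1} u)"
      by (rule Bochner_Integration.integral_add[OF i1 I])
    also have "(LINT u|M. (\<Sum>j<J. tt (Suc j) ^ m * indicator {tt j..<1} u)) = (\<Sum>j<J. (LINT u|M. tt (Suc j) ^ m * indicator {tt j..<1} u))"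
      by (rule Bochner_Integration.integral_sum) (use i2 in auto)
    also have "\<dots> = (\<Sum>j<J. tt (Suc j) ^ m * measure M {tt j..<1})"
      by (intro sum.cong refl) (simp only: integral_mult_right_zero Bochner_Integration.integral_indicator ms)
    also have "(LINT u|M. indicator {tt J..<1} u) = measure M {tt J..<1}"
      by (simp only: Bochner_Integration.integral_indicator ms)
    finally show ?thesis .
  qed
  finally show ?thesis .
qed

lemma rho_pow: "((1/2::real) powr s) ^ n = ((1/2::real) ^ n) powr s"
  by (simp add: powr_power powr_realpow[symmetric] powr_powr mult.commute)

lemma carleson_moment:
  assumes bm: "borel_measure_01 M" and s: "s > 0" and K: "K \<ge> 0"
    and H: "\<And>t. 0 \<le> t \<Longrightarrow> t < 1 \<Longrightarrow> measure M {t..<1} \<le> K * (1 - t) powr s"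
  shows "\<exists>C. \<forall>m. moment M m \<le> C * (real m + 1) powr (- s)"
proof -
  define \<rho> where "\<rho> = (1/2::real) powr s"
  have \<rho>: "0 < \<rho>" "\<rho> < 1" unfolding \<rho>_def using s by (auto intro: powr_less_one[of 2 "-s", simplified powr_minus_divide] simp: powr_divide)
  have mj: "measure M {tt j..<1} \<le> K * \<rho> ^ j" for j
  proof -
    have "measure M {tt j..<1} \<le> K * (1 - tt j) powr s" by (rule H[OF tt_nonneg tt_less1])
    also have "(1 - tt j) powr s = \<rho> ^ j" unfolding \<rho>_def rho_pow by (simp add: tt_def)
    finally show ?thesis .
  qed
  define g where "g i = exp (- (2 ^ i)) / \<rho> ^ Suc i" for i :: nat
  have g_nonneg: "g i \<ge> 0" for i unfolding g_def using \<rho> by simp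
  have g_alt: "g i = exp (- (2 powr real i)) * 2 powr (s * (real i + 1))" for i
  proof -
    have "\<rho> ^ Suc i = (1/2) powr (real (Suc i) * s)"
      unfolding \<rho>_def by (rule powr_power) simp
    also have "\<dots> = 1 / 2 powr (s * (real i + 1))" by (simp add: powr_divide algebra_simps)
    finally have "\<rho> ^ Suc i = 1 / 2 powr (s * (real i + 1))" .
    thus ?thesis unfolding g_def by (simp add: powr_realpow)
  qed
  have "(\<lambda>i::nat. exp (- (2 powr real i)) * 2 powr (s * (real i + 1)) / (1/2) powr real i) \<longlonglongrightarrow> 0"
    by real_asymp
  hence lim: "(\<lambda>i. g i / (1/2) ^ i) \<longlonglongrightarrow> 0" by (simp add: g_alt powr_realpow)
  have "eventually (\<lambda>i. g i / (1/2) ^ i < 1) sequentially"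
    using order_tendstoD(2)[OF lim, of 1] by simp
  hence ev: "eventually (\<lambda>i. norm (g i) \<le> (1/2) ^ i) sequentially"
    by eventually_elim (use g_nonneg in \<open>auto simp: field_simps\<close>)
  have sg: "summable g"
    by (rule summable_comparison_test_ev[OF ev]) (simp add: summable_geometric)
  define D where "D = suminf g"
  have Dle: "(\<Sum>i<J. g i) \<le> D" for J unfolding D_def
    by (rule sum_le_suminf[OF sg]) (use g_nonneg in auto)
  have D0: "D \<ge> 0" unfolding D_def by (rule suminf_nonneg[OF sg g_nonneg])
  define C where "C = max (measure M (space M)) (K * (D + 1) / \<rho>)"
  have "moment M m \<le> C * (real m + 1) powr (- s)" for m
  proof (cases "m = 0")
    case True
    thus ?thesis using moment_le_total[OF bm, of 0] unfolding C_def by simp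
  next
    case False
    then obtain J where J: "2 ^ J \<le> m" "m < 2 ^ (J + 1)" using ex_power_ivl1[of 2 m] by auto
    have Jr: "(2::real) ^ J \<le> real m" using J(1) by (metis numeral_power_le_of_nat_cancel_iff)
    have trm: "tt (Suc j) ^ m * measure M {tt j..<1} \<le> exp (- (2 ^ (J - Suc j))) * (K * \<rho> ^ j)" if "j < J" for j
    proof (rule mult_mono)
      have "tt (Suc j) ^ m \<le> exp (- ((1/2) ^ Suc j)) ^ m"
        unfolding tt_def using exp_ge_add_one_self[of "- ((1/2::real) ^ Suc j)"] power_le_one[of "1/2::real" j]
        by (intro power_mono) auto
      also have "\<dots> = exp (- (real m * (1/2) ^ Suc j))" by (simp add: exp_of_nat_mult[symmetric])
      also have "\<dots> \<le> exp (- (2 ^ (J - Suc j)))"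
      proof -
        have "(2::real) ^ (J - Suc j) = 2 ^ J * (1/2) ^ Suc j"
          using that by (simp add: power_diff field_simps)
        also have "\<dots> \<le> real m * (1/2) ^ Suc j" using Jr by (intro mult_right_mono) auto
        finally show ?thesis by simp
      qed
      finally show "tt (Suc j) ^ m \<le> exp (- (2 ^ (J - Suc j)))" .
    qed (use mj tt_nonneg in auto)
    have "moment M m \<le> (\<Sum>j<J. tt (Suc j) ^ m * measure M {tt j..<1}) + measure M {tt J..<1}"
      by (rule moment_layer[OF bm])
    also have "\<dots> \<le> (\<Sum>j<J. exp (- (2 ^ (J - Suc j))) * (K * \<rho> ^ j)) + K * \<rho> ^ J"
      by (intro add_mono sum_mono trm mj) auto
    also have "(\<Sum>j<J. exp (- (2 ^ (J - Suc j))) * (K * \<rho> ^ j)) = (\<Sum>i<J. exp (- (2 ^ (J - Suc (J - Suc i)))) * (K * \<rho> ^ (J - Suc i)))"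
      by (rule sum.nat_diff_reindex[symmetric])
    also have "\<dots> = (\<Sum>i<J. K * \<rho> ^ J * g i)"
    proof (intro sum.cong refl)
      fix i assume i: "i \<in> {..<J}"
      have e: "J - Suc (J - Suc i) = i" using i by auto
      have ji: "J - Suc i + Suc i = J" using i by simp
      have "\<rho> ^ (J - Suc i) * \<rho> ^ Suc i = \<rho> ^ J" by (metis ji power_add)
      hence "\<rho> ^ (J - Suc i) = \<rho> ^ J / \<rho> ^ Suc i" using \<rho> by (simp add: field_simps)
      thus "exp (- (2 ^ (J - Suc (J - Suc i)))) * (K * \<rho> ^ (J - Suc i)) = K * \<rho> ^ J * g i"
        unfolding e g_def by simp
    qed
    also have "\<dots> = K * \<rho> ^ J * (\<Sum>i<J. g i)" by (simp add: sum_distrib_left)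
    also have "K * \<rho> ^ J * (\<Sum>i<J. g i) + K * \<rho> ^ J \<le> K * \<rho> ^ J * D + K * \<rho> ^ J"
      using K \<rho> by (intro add_mono mult_left_mono Dle) auto
    also have "\<dots> = K * (D + 1) / \<rho> * \<rho> ^ Suc J" using \<rho> by (simp add: field_simps)
    also have "\<dots> \<le> K * (D + 1) / \<rho> * (real m + 1) powr (- s)"
    proof (intro mult_left_mono)
      have "\<rho> ^ Suc J = (2 ^ Suc J) powr (- s)"
        unfolding \<rho>_def rho_pow by (simp add: powr_minus_divide powr_divide power_one_over)
      also have "\<dots> \<le> (real m + 1) powr (- s)"
      proof (rule powr_mono2')
        have "m + 1 \<le> 2 ^ Suc J" using J(2) by simp
        hence "real (m + 1) \<le> real (2 ^ Suc J)" by (simp only: of_nat_le_iff)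
        thus "real m + 1 \<le> 2 ^ Suc J" by simp
      qed (use s in auto)
      finally show "\<rho> ^ Suc J \<le> (real m + 1) powr (- s)" .
    qed (use K D0 \<rho> in auto)
    also have "\<dots> \<le> C * (real m + 1) powr (- s)" unfolding C_def by (intro mult_right_mono) auto
    finally show ?thesis by simp
  qed
  thus ?thesis by blast
qed

definition Kk :: "real \<Rightarrow> real \<Rightarrow> nat \<Rightarrow> nat \<Rightarrow> real" where
  "Kk a s n k = (real n + 1) powr (s - (1 + a) / 2) * (real n + real k + 1) powr (- s) * (real k + 1) powr ((a - 1) / 2)"

lemma kernel_schur:
  assumes "a > 0" "s > a / 2"
  shows "\<exists>B \<ge> 0. \<forall>N0 N x. (\<Sum>n<N0. (\<Sum>k<N. Kk a s n k * x k)\<^sup>2) \<le> B * (\<Sum>k<N. (x k)\<^sup>2)"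
proof -
  obtain C1 where C1: "C1 > 0" "\<And>n N. (\<Sum>k<N. (real k + 1) powr (a/2 - 1) * (real n + real k + 1) powr (- s)) \<le> C1 * (real n + 1) powr (a/2 - s)"
    using L3[of "a/2" s] assms by auto
  obtain C2 where C2: "C2 > 0" "\<And>n N. (\<Sum>k<N. (real k + 1) powr ((s - a/2) - 1) * (real n + real k + 1) powr (- s)) \<le> C2 * (real n + 1) powr ((s - a/2) - s)"
    using L3[of "s - a/2" s] assms by auto
  define p where "p n = (real n + 1) powr (- 1/2)" for n :: nat
  have "(\<Sum>n<N0. (\<Sum>k<N. Kk a s n k * x k)\<^sup>2) \<le> C1 * C2 * (\<Sum>k<N. (x k)\<^sup>2)" for N0 N x
  proof (rule schur_finite[where p = p and q = p])
    show "\<And>n k. Kk a s n k \<ge> 0" unfolding Kk_def by simp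
    show "\<And>n. p n > 0" unfolding p_def by simp
    thus "\<And>n. p n > 0" .
    show "C1 \<ge> 0" "C2 \<ge> 0" using C1 C2 by auto
  next
    fix n
    have "(\<Sum>k<N. Kk a s n k * p k) = (real n + 1) powr (s - (1 + a) / 2) * (\<Sum>k<N. (real k + 1) powr (a/2 - 1) * (real n + real k + 1) powr (- s))"
      unfolding sum_distrib_left
    proof (intro sum.cong refl)
      fix k
      have e: "(a - 1) / 2 + - 1/2 = a/2 - 1" by (simp add: field_simps)
      have "(real k + 1) powr ((a - 1) / 2) * (real k + 1) powr (- 1/2) = (real k + 1) powr (a/2 - 1)"
        by (simp only: powr_add[symmetric] e)
      thus "Kk a s n k * p k = (real n + 1) powr (s - (1 + a) / 2) * ((real k + 1) powr (a / 2 - 1) * (real n + real k + 1) powr - s)"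
        unfolding Kk_def p_def by (metis (no_types, lifting) mult.assoc mult.commute)
    qed
    also have "\<dots> \<le> (real n + 1) powr (s - (1 + a) / 2) * (C1 * (real n + 1) powr (a/2 - s))"
      by (intro mult_left_mono C1) auto
    also have "\<dots> = C1 * p n" unfolding p_def
      by (simp add: mult.left_commute powr_add[symmetric] field_simps)
    finally show "(\<Sum>k<N. Kk a s n k * p k) \<le> C1 * p n" .
  next
    fix k
    have "(\<Sum>n<N0. Kk a s n k * p n) = (real k + 1) powr ((a - 1) / 2) * (\<Sum>n<N0. (real n + 1) powr ((s - a/2) - 1) * (real k + real n + 1) powr (- s))"
      unfolding sum_distrib_left
    proof (intro sum.cong refl)
      fix n
      have e: "(s - (1 + a) / 2) + - 1/2 = (s - a/2) - 1" by (simp add: field_simps)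
      have "(real n + 1) powr (s - (1 + a) / 2) * (real n + 1) powr (- 1/2) = (real n + 1) powr ((s - a/2) - 1)"
        by (simp only: powr_add[symmetric] e)
      thus "Kk a s n k * p n = (real k + 1) powr ((a - 1) / 2) * ((real n + 1) powr ((s - a/2) - 1) * (real k + real n + 1) powr - s)"
        unfolding Kk_def p_def by (simp add: add_ac mult_ac)
    qed
    also have "\<dots> \<le> (real k + 1) powr ((a - 1) / 2) * (C2 * (real k + 1) powr ((s - a/2) - s))"
      by (intro mult_left_mono C2) auto
    also have "\<dots> = C2 * p k" unfolding p_def
      by (simp add: mult.left_commute powr_add[symmetric] field_simps)
    finally show "(\<Sum>n<N0. Kk a s n k * p n) \<le> C2 * p k" .
  qed auto
  thus ?thesis using C1 C2 by (intro exI[of _ "C1 * C2"]) auto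
qed



lemma summable_shift_powr: "p < -1 \<Longrightarrow> summable (\<lambda>k::nat. (real k + 1) powr p)"
proof -
  assume "p < -1"
  hence "summable (\<lambda>k::nat. real k powr p)" by (simp add: summable_real_powr_iff)
  hence "summable (\<lambda>k::nat. real (Suc k) powr p)" by (subst summable_Suc_iff)
  thus ?thesis by (simp add: add.commute)
qed

lemma forward:
  fixes M :: "real measure" and \<alpha> \<beta> \<gamma> s' Cm :: real
  assumes bm: "borel_measure_01 M" and \<alpha>: "0 < \<alpha>" and \<gamma>: "0 < \<gamma>"
    and s': "s' > \<alpha> / 2" "\<gamma> - (\<beta> - \<alpha>) / 2 \<le> s'"
    and mom: "\<And>m. moment M m \<le> Cm * (real m + 1) powr (- s')"
  shows "Hilbert_bounded M \<gamma> \<alpha> \<beta>"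
proof -
  from wgt_bounds[OF \<gamma>] obtain cw Cw where wb0: "cw > 0" "\<forall>n. cw * (real n + 1) powr (\<gamma> - 1) \<le> wgt \<gamma> n \<and> wgt \<gamma> n \<le> Cw * (real n + 1) powr (\<gamma> - 1)"
    by blast
  have wb: "\<And>n. wgt \<gamma> n \<le> Cw * (real n + 1) powr (\<gamma> - 1)" using wb0(2) by blast
  have Cw0: "Cw \<ge> 0" using wb[of 0] wgt_pos[OF \<gamma>, of 0] by simp
  have Cm0: "Cm \<ge> 0" using mom[of 0] moment_nonneg[OF bm, of 0] by simp
  obtain Bk where Bk: "Bk \<ge> 0" "\<And>N0 N x. (\<Sum>n<N0. (\<Sum>k<N. Kk \<alpha> s' n k * x k)\<^sup>2) \<le> Bk * (\<Sum>k<N. (x k)\<^sup>2)"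
    using kernel_schur[OF \<alpha> s'(1)] by blast
  define B where "B = (Cw * Cm)\<^sup>2 * Bk"
  have B0: "B \<ge> 0" unfolding B_def using Bk by simp
  have main: "(\<forall>n. summable (\<lambda>k. complex_of_real (moment M (n + k)) * a k)) \<and>
        in_D \<beta> (Hilbert_op M \<gamma> a) \<and>
        D_norm \<beta> (Hilbert_op M \<gamma> a) \<le> sqrt B * D_norm \<alpha> a" if aD: "in_D \<alpha> a" for a
  proof -
    define x where "x k = (real k + 1) powr ((1 - \<alpha>) / 2) * cmod (a k)" for k
    have x2: "(x k)\<^sup>2 = (real k + 1) powr (1 - \<alpha>) * (cmod (a k))\<^sup>2" for k
    proof -
      have e: "(1 - \<alpha>) / 2 + (1 - \<alpha>) / 2 = 1 - \<alpha>" by simp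
      have "((real k + 1) powr ((1 - \<alpha>) / 2))\<^sup>2 = (real k + 1) powr (1 - \<alpha>)"
        by (simp only: power2_eq_square powr_add[symmetric] e)
      thus ?thesis unfolding x_def by (simp only: power_mult_distrib)
    qed
    have x0: "x k \<ge> 0" for k unfolding x_def by simp
    have sx: "summable (\<lambda>k. (x k)\<^sup>2)" using aD unfolding in_D_def x2 .
    have Dsum: "D_normsq \<alpha> a = (\<Sum>k. (x k)\<^sup>2)" unfolding D_normsq_def x2 ..
    have xle: "(\<Sum>k<N. (x k)\<^sup>2) \<le> D_normsq \<alpha> a" for N
      unfolding Dsum by (rule sum_le_suminf[OF sx]) auto
    have Dnn: "D_normsq \<alpha> a \<ge> 0" unfolding Dsum by (rule suminf_nonneg[OF sx]) auto
    have tb: "norm (complex_of_real (moment M (n + k)) * a k) \<le> Cm * (real n + real k + 1) powr (- s') * (real k + 1) powr ((\<alpha> - 1) / 2) * x k" for n k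
    proof -
      have "norm (complex_of_real (moment M (n + k)) * a k) = moment M (n + k) * cmod (a k)"
        using moment_nonneg[OF bm] by (simp add: norm_mult)
      also have "\<dots> \<le> Cm * (real n + real k + 1) powr (- s') * cmod (a k)"
        using mom[of "n + k"] by (intro mult_right_mono) (auto simp: add_ac)
      also have "cmod (a k) = (real k + 1) powr ((\<alpha> - 1) / 2) * x k"
      proof -
        have e: "(\<alpha> - 1) / 2 + (1 - \<alpha>) / 2 = 0" by (simp add: field_simps)
        have "(real k + 1) powr ((\<alpha> - 1) / 2) * (real k + 1) powr ((1 - \<alpha>) / 2) = 1"
          by (simp only: powr_add[symmetric] e) simp
        thus ?thesis unfolding x_def by (metis mult.assoc mult_1)
      qed
      finally show ?thesis by (simp add: mult.assoc)
    qed
    have summ: "summable (\<lambda>k. complex_of_real (moment M (n + k)) * a k)" for n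
    proof (rule summable_comparison_test)
      show "\<exists>N. \<forall>k\<ge>N. norm (complex_of_real (moment M (n + k)) * a k) \<le> Cm * (((real k + 1) powr (\<alpha> - 1 - 2 * s') + (x k)\<^sup>2) / 2)"
      proof (intro exI allI impI)
        fix k :: nat
        let ?u = "(real k + 1) powr ((\<alpha> - 1) / 2 - s')"
        have "(real n + real k + 1) powr (- s') \<le> (real k + 1) powr (- s')"
          using s' \<alpha> by (intro powr_mono2') auto
        hence "norm (complex_of_real (moment M (n + k)) * a k) \<le> Cm * (real k + 1) powr (- s') * (real k + 1) powr ((\<alpha> - 1) / 2) * x k"
        proof -
          have "Cm * (real n + real k + 1) powr (- s') \<le> Cm * (real k + 1) powr (- s')"
            using \<open>(real n + real k + 1) powr (- s') \<le> (real k + 1) powr (- s')\<close> Cm0 by (rule mult_left_mono)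
          hence "Cm * (real n + real k + 1) powr (- s') * (real k + 1) powr ((\<alpha> - 1) / 2) * x k \<le> Cm * (real k + 1) powr (- s') * (real k + 1) powr ((\<alpha> - 1) / 2) * x k"
            using x0[of k] by (intro mult_right_mono) auto
          thus ?thesis using tb[of n k] by linarith
        qed
        also have "\<dots> = Cm * (?u * x k)" by (simp add: powr_add[symmetric] mult_ac)
        also have "?u * x k \<le> (?u\<^sup>2 + (x k)\<^sup>2) / 2" using sum_squares_bound[of ?u "x k"] by simp
        also have "?u\<^sup>2 = (real k + 1) powr (\<alpha> - 1 - 2 * s')"
        proof -
          have e: "((\<alpha> - 1) / 2 - s') + ((\<alpha> - 1) / 2 - s') = \<alpha> - 1 - 2 * s'" by (simp add: field_simps)
          show ?thesis by (simp only: power2_eq_square powr_add[symmetric] e)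
        qed
        finally show "norm (complex_of_real (moment M (n + k)) * a k) \<le> Cm * (((real k + 1) powr (\<alpha> - 1 - 2 * s') + (x k)\<^sup>2) / 2)"
          using Cm0 by (simp add: mult_left_mono)
      qed
      show "summable (\<lambda>k. Cm * (((real k + 1) powr (\<alpha> - 1 - 2 * s') + (x k)\<^sup>2) / 2))"
        using s' by (intro summable_mult summable_divide summable_add summable_shift_powr sx) auto
    qed
    define S where "S n = (\<Sum>k. complex_of_real (moment M (n + k)) * a k)" for n
    define SN where "SN N n = (\<Sum>k<N. complex_of_real (moment M (n + k)) * a k)" for N n
    have SN_lim: "(\<lambda>N. SN N n) \<longlonglongrightarrow> S n" for n
      unfolding SN_def S_def by (rule summable_LIMSEQ[OF summ])
    have Hn: "cmod (Hilbert_op M \<gamma> a n) = cmod (S n) * wgt \<gamma> n" for n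
    proof -
      have "Hilbert_op M \<gamma> a n = S n * complex_of_real (wgt \<gamma> n)" unfolding Hilbert_op_def S_def wgt_def ..
      thus ?thesis using wgt_pos[OF \<gamma>, of n] by (simp add: norm_mult)
    qed
    define A where "A n = (real n + 1) powr ((1 - \<beta>) / 2) * wgt \<gamma> n" for n
    have A0: "A n \<ge> 0" for n unfolding A_def using wgt_pos[OF \<gamma>, of n] by simp
    have A_le: "A n \<le> Cw * (real n + 1) powr (s' - (1 + \<alpha>) / 2)" for n
    proof -
      have "A n \<le> (real n + 1) powr ((1 - \<beta>) / 2) * (Cw * (real n + 1) powr (\<gamma> - 1))"
        unfolding A_def by (intro mult_left_mono wb) simp
      also have "\<dots> = Cw * (real n + 1) powr ((1 - \<beta>) / 2 + (\<gamma> - 1))"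
        by (simp add: powr_add mult_ac)
      also have "\<dots> \<le> Cw * (real n + 1) powr (s' - (1 + \<alpha>) / 2)"
        using s'(2) Cw0 by (intro mult_left_mono powr_mono) (auto simp: field_simps)
      finally show ?thesis .
    qed
    have TN: "A n * cmod (SN N n) \<le> Cw * Cm * (\<Sum>k<N. Kk \<alpha> s' n k * x k)" for N n
    proof -
      have "cmod (SN N n) \<le> (\<Sum>k<N. norm (complex_of_real (moment M (n + k)) * a k))"
        unfolding SN_def by (rule norm_sum)
      also have "\<dots> \<le> (\<Sum>k<N. Cm * (real n + real k + 1) powr (- s') * (real k + 1) powr ((\<alpha> - 1) / 2) * x k)"
        by (intro sum_mono tb)
      finally have c1: "cmod (SN N n) \<le> \<dots>" .
      have "A n * cmod (SN N n) \<le> Cw * (real n + 1) powr (s' - (1 + \<alpha>) / 2) * (\<Sum>k<N. Cm * (real n + real k + 1) powr (- s') * (real k + 1) powr ((\<alpha> - 1) / 2) * x k)"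
        using A_le[of n] A0[of n] c1 by (intro mult_mono) (auto intro!: sum_nonneg mult_nonneg_nonneg x0 Cm0)
      also have "\<dots> = Cw * Cm * (\<Sum>k<N. Kk \<alpha> s' n k * x k)"
        unfolding Kk_def sum_distrib_left by (intro sum.cong refl) (simp add: mult_ac)
      finally show ?thesis .
    qed
    have fin: "(\<Sum>n<N0. (A n * cmod (SN N n))\<^sup>2) \<le> B * D_normsq \<alpha> a" for N0 N
    proof -
      have "(\<Sum>n<N0. (A n * cmod (SN N n))\<^sup>2) \<le> (\<Sum>n<N0. (Cw * Cm * (\<Sum>k<N. Kk \<alpha> s' n k * x k))\<^sup>2)"
        by (intro sum_mono power_mono TN) (use A0 in simp)
      also have "\<dots> = (Cw * Cm)\<^sup>2 * (\<Sum>n<N0. (\<Sum>k<N. Kk \<alpha> s' n k * x k)\<^sup>2)"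
        unfolding power_mult_distrib[of "Cw * Cm"] by (rule sum_distrib_left[symmetric])
      also have "\<dots> \<le> (Cw * Cm)\<^sup>2 * (Bk * (\<Sum>k<N. (x k)\<^sup>2))"
        by (intro mult_left_mono Bk) simp
      also have "\<dots> \<le> (Cw * Cm)\<^sup>2 * (Bk * D_normsq \<alpha> a)"
        using Bk(1) by (intro mult_left_mono xle) auto
      finally show ?thesis unfolding B_def by (simp add: mult_ac)
    qed
    have part: "(\<Sum>n<N0. (A n * cmod (S n))\<^sup>2) \<le> B * D_normsq \<alpha> a" for N0
    proof (rule LIMSEQ_le_const2)
      show "(\<lambda>N. \<Sum>n<N0. (A n * cmod (SN N n))\<^sup>2) \<longlonglongrightarrow> (\<Sum>n<N0. (A n * cmod (S n))\<^sup>2)"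
        by (intro tendsto_intros SN_lim)
    qed (use fin in auto)
    have termeq: "(real n + 1) powr (1 - \<beta>) * (cmod (Hilbert_op M \<gamma> a n))\<^sup>2 = (A n * cmod (S n))\<^sup>2" for n
    proof -
      have e: "(1 - \<beta>) / 2 + (1 - \<beta>) / 2 = 1 - \<beta>" by simp
      have "((real n + 1) powr ((1 - \<beta>) / 2))\<^sup>2 = (real n + 1) powr (1 - \<beta>)"
        by (simp only: power2_eq_square powr_add[symmetric] e)
      thus ?thesis unfolding Hn A_def by (simp add: power_mult_distrib mult_ac)
    qed
    have nnb: "0 \<le> (real n + 1) powr (1 - \<beta>) * (cmod (Hilbert_op M \<gamma> a n))\<^sup>2" for n by simp
    have sb: "summable (\<lambda>n. (real n + 1) powr (1 - \<beta>) * (cmod (Hilbert_op M \<gamma> a n))\<^sup>2)"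
      by (rule summableI_nonneg_bounded[OF nnb]) (use part in \<open>simp add: termeq\<close>)
    have Dle: "D_normsq \<beta> (Hilbert_op M \<gamma> a) \<le> B * D_normsq \<alpha> a"
      unfolding D_normsq_def[of \<beta>] by (rule suminf_le_const[OF sb]) (use part in \<open>simp add: termeq\<close>)
    have "D_norm \<beta> (Hilbert_op M \<gamma> a) \<le> sqrt (B * D_normsq \<alpha> a)"
      unfolding D_norm_def using Dle by simp
    also have "\<dots> = sqrt B * D_norm \<alpha> a" unfolding D_norm_def by (simp add: real_sqrt_mult)
    finally show ?thesis using summ sb unfolding in_D_def by blast
  qed
  show ?thesis unfolding Hilbert_bounded_def using main by blast
qed


lemma conv_core:
  fixes M :: "real measure" and \<alpha> \<beta> \<gamma> cw C0 t :: real
  assumes bm: "borel_measure_01 M" and \<alpha>: "0 < \<alpha>" "\<alpha> \<le> 2" and \<beta>: "2 \<le> \<beta>" and \<gamma>: "1 \<le> \<gamma>"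
    and cw: "cw > 0" and wl: "\<And>n. cw * (real n + 1) powr (\<gamma> - 1) \<le> wgt \<gamma> n"
    and C0: "C0 \<ge> 0"
    and Hb: "\<And>a. in_D \<alpha> a \<Longrightarrow> in_D \<beta> (Hilbert_op M \<gamma> a) \<and> D_norm \<beta> (Hilbert_op M \<gamma> a) \<le> C0 * D_norm \<alpha> a"
    and t: "7/8 \<le> t" "t < 1"
  shows "measure M {t..<1} \<le> sqrt (2 * C0\<^sup>2 / (2 powr (1 - \<beta>) * cw\<^sup>2 / 4)) * 2 powr \<bar>\<gamma> - (\<beta> - \<alpha>) / 2\<bar> * 8 powr (\<gamma> - (\<beta> - \<alpha>) / 2) * (1 - t) powr (\<gamma> - (\<beta> - \<alpha>) / 2)"
proof -
  define s where "s = \<gamma> - (\<beta> - \<alpha>) / 2"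
  define c1 where "c1 = 2 powr (1 - \<beta>) * cw\<^sup>2 / 4"
  have c1: "c1 > 0" unfolding c1_def using cw by simp
  define \<mu> where "\<mu> = measure M {t..<1}"
  have \<mu>0: "\<mu> \<ge> 0" unfolding \<mu>_def by simp
  define X where "X = 1 / (8 * (1 - t))"
  have X1: "X \<ge> 1" unfolding X_def using t by (simp add: field_simps)
  define N where "N = nat \<lfloor>X\<rfloor>"
  have NX: "real N \<le> X" "X < real N + 1" unfolding N_def using X1 by linarith+
  have N1: "N \<ge> 1" unfolding N_def using X1 by linarith
  define P where "P = real N + 1"
  have P: "P \<ge> 2" "X \<le> P" "P \<le> 2 * X" unfolding P_def using NX N1 X1 by auto
  define I where "I = {N..2*N}"
  have finI: "finite I" unfolding I_def by simp
  have cardI: "real (card I) = P" unfolding I_def P_def by simp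
  define a :: "nat \<Rightarrow> complex" where "a k = (if k \<in> I then 1 else 0)" for k
  have aD: "in_D \<alpha> a" unfolding in_D_def
    by (rule summable_finite[OF finI]) (simp add: a_def)
  have Da: "D_normsq \<alpha> a = (\<Sum>k\<in>I. (real k + 1) powr (1 - \<alpha>))"
    unfolding D_normsq_def by (subst suminf_finite[OF finI]) (auto simp: a_def)
  have Da_le: "D_normsq \<alpha> a \<le> 2 * P powr (2 - \<alpha>)"
  proof -
    have "(real k + 1) powr (1 - \<alpha>) \<le> 2 * P powr (1 - \<alpha>)" if "k \<in> I" for k
    proof (cases "\<alpha> \<ge> 1")
      case True
      have "(real k + 1) powr (1 - \<alpha>) \<le> P powr (1 - \<alpha>)"
        using that True P unfolding I_def P_def by (intro powr_mono2') auto
      moreover have "P powr (1 - \<alpha>) \<ge> 0" by simp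
      ultimately show ?thesis by linarith
    next
      case False
      have "(real k + 1) powr (1 - \<alpha>) \<le> (2 * P) powr (1 - \<alpha>)"
        using that False P unfolding I_def P_def by (intro powr_mono2) auto
      also have "\<dots> = 2 powr (1 - \<alpha>) * P powr (1 - \<alpha>)" using P by (simp add: powr_mult)
      also have "2 powr (1 - \<alpha>) \<le> 2 powr 1" using \<alpha> by (intro powr_mono) auto
      hence "2 powr (1 - \<alpha>) * P powr (1 - \<alpha>) \<le> 2 * P powr (1 - \<alpha>)" by (intro mult_right_mono) auto
      finally show ?thesis .
    qed
    hence "D_normsq \<alpha> a \<le> (\<Sum>k\<in>I. 2 * P powr (1 - \<alpha>))" unfolding Da by (intro sum_mono) 
    also have "\<dots> = P * (2 * P powr (1 - \<alpha>))" using cardI by simp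
    also have "\<dots> = 2 * P powr (2 - \<alpha>)"
      using P by (simp add: powr_diff powr_add field_simps power2_eq_square)
    finally show ?thesis .
  qed
  have Dnn: "D_normsq \<alpha> a \<ge> 0" unfolding Da by (intro sum_nonneg) simp
  from Hb[OF aD] have bD: "in_D \<beta> (Hilbert_op M \<gamma> a)" and nb: "D_norm \<beta> (Hilbert_op M \<gamma> a) \<le> C0 * D_norm \<alpha> a"
    by auto
  define Db where "Db = D_normsq \<beta> (Hilbert_op M \<gamma> a)"
  have Dbnn: "Db \<ge> 0" unfolding Db_def D_normsq_def using bD unfolding in_D_def
    by (intro suminf_nonneg) auto
  have Db_le: "Db \<le> C0\<^sup>2 * (2 * P powr (2 - \<alpha>))"
  proof -
    have "sqrt Db \<le> C0 * sqrt (D_normsq \<alpha> a)" using nb unfolding D_norm_def Db_def .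
    hence "(sqrt Db)\<^sup>2 \<le> (C0 * sqrt (D_normsq \<alpha> a))\<^sup>2" using Dbnn by (intro power_mono) auto
    hence "Db \<le> C0\<^sup>2 * D_normsq \<alpha> a" using Dbnn Dnn by (simp add: power_mult_distrib)
    also have "\<dots> \<le> C0\<^sup>2 * (2 * P powr (2 - \<alpha>))" by (intro mult_left_mono Da_le) auto
    finally show ?thesis .
  qed
  have half: "t ^ j \<ge> 1/2" if "j \<le> 4 * N" for j
  proof -
    have "t ^ (4 * N) \<le> t ^ j" using that t by (intro power_decreasing) auto
    moreover have "1 + real (4 * N) * (t - 1) \<le> (1 + (t - 1)) ^ (4 * N)"
      using t by (intro Bernoulli_inequality) auto
    moreover have "real (4 * N) * (1 - t) \<le> 1/2"
    proof -
      have "real (4 * N) * (1 - t) \<le> 4 * X * (1 - t)" using NX t by (intro mult_right_mono) auto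
      also have "\<dots> = 1/2" unfolding X_def using t by (simp add: field_simps)
      finally show ?thesis .
    qed
    ultimately show ?thesis by (simp add: algebra_simps)
  qed
  have mom_low: "moment M (n + k) \<ge> \<mu> / 2" if "n \<in> I" "k \<in> I" for n k
  proof -
    have "n + k \<le> 4 * N" using that unfolding I_def by auto
    hence "1/2 * \<mu> \<le> t ^ (n + k) * \<mu>" using half \<mu>0 by (intro mult_right_mono) auto
    also have "\<dots> \<le> moment M (n + k)" unfolding \<mu>_def using t by (intro moment_ge[OF bm]) auto
    finally show ?thesis by simp
  qed
  have term_low: "(real n + 1) powr (1 - \<beta>) * (cmod (Hilbert_op M \<gamma> a n))\<^sup>2 \<ge> (2 * P) powr (1 - \<beta>) * ((P * \<mu> / 2) * (cw * P powr (\<gamma> - 1)))\<^sup>2" if n: "n \<in> I" for n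
  proof -
    have Sn: "(\<Sum>k. complex_of_real (moment M (n + k)) * a k) = complex_of_real (\<Sum>k\<in>I. moment M (n + k))"
      by (subst suminf_finite[OF finI]) (auto simp: a_def)
    have "Hilbert_op M \<gamma> a n = complex_of_real ((\<Sum>k\<in>I. moment M (n + k)) * wgt \<gamma> n)"
      unfolding Hilbert_op_def Sn wgt_def by simp
    hence "cmod (Hilbert_op M \<gamma> a n) = \<bar>(\<Sum>k\<in>I. moment M (n + k)) * wgt \<gamma> n\<bar>"
      by (simp only: norm_of_real)
    also have "\<dots> = (\<Sum>k\<in>I. moment M (n + k)) * wgt \<gamma> n"
      using wgt_pos[of \<gamma> n] \<gamma> moment_nonneg[OF bm] by (intro abs_of_nonneg mult_nonneg_nonneg sum_nonneg) auto
    finally have Hn: "cmod (Hilbert_op M \<gamma> a n) = (\<Sum>k\<in>I. moment M (n + k)) * wgt \<gamma> n" .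
    have s1: "(\<Sum>k\<in>I. moment M (n + k)) \<ge> P * \<mu> / 2"
    proof -
      have "(\<Sum>k\<in>I. moment M (n + k)) \<ge> (\<Sum>k\<in>I. \<mu> / 2)" by (intro sum_mono mom_low n)
      thus ?thesis using cardI by simp
    qed
    have w1: "wgt \<gamma> n \<ge> cw * P powr (\<gamma> - 1)"
    proof -
      have "P powr (\<gamma> - 1) \<le> (real n + 1) powr (\<gamma> - 1)"
        using n \<gamma> P unfolding I_def P_def by (intro powr_mono2) auto
      hence "cw * P powr (\<gamma> - 1) \<le> cw * (real n + 1) powr (\<gamma> - 1)" using cw by simp
      thus ?thesis using wl[of n] by linarith
    qed
    have "(P * \<mu> / 2) * (cw * P powr (\<gamma> - 1)) \<le> cmod (Hilbert_op M \<gamma> a n)"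
      unfolding Hn using s1 w1 P \<mu>0 cw by (intro mult_mono) (auto intro!: sum_nonneg moment_nonneg[OF bm])
    hence sq: "((P * \<mu> / 2) * (cw * P powr (\<gamma> - 1)))\<^sup>2 \<le> (cmod (Hilbert_op M \<gamma> a n))\<^sup>2"
      using P \<mu>0 cw by (intro power_mono) auto
    have "(2 * P) powr (1 - \<beta>) \<le> (real n + 1) powr (1 - \<beta>)"
      using n \<beta> P unfolding I_def P_def by (intro powr_mono2') auto
    thus ?thesis using sq by (intro mult_mono) auto
  qed
  have "P * ((2 * P) powr (1 - \<beta>) * ((P * \<mu> / 2) * (cw * P powr (\<gamma> - 1)))\<^sup>2) = (\<Sum>n\<in>I. (2 * P) powr (1 - \<beta>) * ((P * \<mu> / 2) * (cw * P powr (\<gamma> - 1)))\<^sup>2)"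
    using cardI by simp
  also have "\<dots> \<le> (\<Sum>n\<in>I. (real n + 1) powr (1 - \<beta>) * (cmod (Hilbert_op M \<gamma> a n))\<^sup>2)"
    by (intro sum_mono term_low)
  also have "\<dots> \<le> Db" unfolding Db_def D_normsq_def
    by (rule sum_le_suminf) (use bD finI in \<open>auto simp: in_D_def\<close>)
  finally have low: "P * ((2 * P) powr (1 - \<beta>) * ((P * \<mu> / 2) * (cw * P powr (\<gamma> - 1)))\<^sup>2) \<le> Db" .
  have ident: "P * ((2 * P) powr (1 - \<beta>) * ((P * \<mu> / 2) * (cw * P powr (\<gamma> - 1)))\<^sup>2) = c1 * \<mu>\<^sup>2 * P powr (2 + 2 * \<gamma> - \<beta>)"
  proof -
    have e: "P powr (2 + 2 * \<gamma> - \<beta>) = P * P powr (1 - \<beta>) * P * P * P powr (\<gamma> - 1) * P powr (\<gamma> - 1)"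
    proof -
      have "P powr (2 + 2 * \<gamma> - \<beta>) = P powr (1 + (1 - \<beta>) + 1 + 1 + (\<gamma> - 1) + (\<gamma> - 1))" by (simp add: algebra_simps)
      also have "\<dots> = P * P powr (1 - \<beta>) * P * P * P powr (\<gamma> - 1) * P powr (\<gamma> - 1)"
        using P by (simp only: powr_add powr_one)
      finally show ?thesis .
    qed
    show ?thesis unfolding e c1_def using P by (simp add: powr_mult power2_eq_square mult_ac)
  qed
  have key: "c1 * \<mu>\<^sup>2 * P powr (2 + 2 * \<gamma> - \<beta>) \<le> C0\<^sup>2 * (2 * P powr (2 - \<alpha>))"
    using low Db_le unfolding ident by linarith
  define Q where "Q = 2 * C0\<^sup>2 / c1"
  have mu2: "\<mu>\<^sup>2 \<le> Q * P powr (- 2 * s)"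
  proof -
    have pp: "P powr (2 + 2 * \<gamma> - \<beta>) > 0" using P by simp
    have "\<mu>\<^sup>2 \<le> C0\<^sup>2 * (2 * P powr (2 - \<alpha>)) / (c1 * P powr (2 + 2 * \<gamma> - \<beta>))"
      using key c1 pp by (simp add: field_simps)
    also have "\<dots> = Q * (P powr (2 - \<alpha>) / P powr (2 + 2 * \<gamma> - \<beta>))" unfolding Q_def by (simp add: field_simps)
    also have "P powr (2 - \<alpha>) / P powr (2 + 2 * \<gamma> - \<beta>) = P powr (- 2 * s)"
    proof -
      have e: "(2 - \<alpha>) - (2 + 2 * \<gamma> - \<beta>) = - 2 * s" unfolding s_def by (simp add: field_simps)
      show ?thesis by (simp only: powr_diff[symmetric] e)
    qed
    finally show ?thesis .
  qed
  have Q0: "Q \<ge> 0" unfolding Q_def using c1 by simp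
  have mu1: "\<mu> \<le> sqrt Q * P powr (- s)"
  proof (rule power2_le_imp_le)
    have "(sqrt Q * P powr (- s))\<^sup>2 = Q * P powr (- 2 * s)"
    proof -
      have e: "- s + - s = - 2 * s" by simp
      have "(P powr (- s))\<^sup>2 = P powr (- 2 * s)" by (simp only: power2_eq_square powr_add[symmetric] e)
      thus ?thesis using Q0 by (simp add: power_mult_distrib)
    qed
    thus "\<mu>\<^sup>2 \<le> (sqrt Q * P powr (- s))\<^sup>2" using mu2 by simp
  qed (use Q0 in simp)
  have Xs: "X powr (- s) = 8 powr s * (1 - t) powr s"
  proof -
    have "X powr (- s) = (8 * (1 - t)) powr s" unfolding X_def using t
      by (simp add: powr_minus_divide powr_divide)
    also have "\<dots> = 8 powr s * (1 - t) powr s" by (rule powr_mult)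
    finally show ?thesis .
  qed
  have Ps: "P powr (- s) \<le> 2 powr \<bar>s\<bar> * X powr (- s)"
  proof (cases "s \<ge> 0")
    case True
    have "P powr (- s) \<le> X powr (- s)" using True P X1 by (intro powr_mono2') auto
    also have "\<dots> \<le> 2 powr \<bar>s\<bar> * X powr (- s)"
    proof -
      have "1 \<le> 2 powr \<bar>s\<bar>" by (rule ge_one_powr_ge_zero) auto
      hence "1 * X powr (- s) \<le> 2 powr \<bar>s\<bar> * X powr (- s)" by (intro mult_right_mono) auto
      thus ?thesis by simp
    qed
    finally show ?thesis .
  next
    case False
    have "P powr (- s) \<le> (2 * X) powr (- s)" using False P X1 by (intro powr_mono2) auto
    also have "\<dots> = 2 powr \<bar>s\<bar> * X powr (- s)" using False X1 by (simp add: powr_mult)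
    finally show ?thesis .
  qed
  have "\<mu> \<le> sqrt Q * (2 powr \<bar>s\<bar> * (8 powr s * (1 - t) powr s))"
    using mu1 Ps Q0 unfolding Xs by (meson mult_left_mono order_trans real_sqrt_ge_zero)
  thus ?thesis unfolding \<mu>_def Q_def c1_def s_def by (simp add: mult_ac)
qed

lemma converse:
  fixes M :: "real measure" and \<alpha> \<beta> \<gamma> :: real
  assumes bm: "borel_measure_01 M" and \<alpha>: "0 < \<alpha>" "\<alpha> \<le> 2" and \<beta>: "2 \<le> \<beta>" and \<gamma>: "1 \<le> \<gamma>"
    and Hb: "Hilbert_bounded M \<gamma> \<alpha> \<beta>"
  shows "carleson (\<gamma> - (\<beta> - \<alpha>) / 2) M"
proof -
  define s where "s = \<gamma> - (\<beta> - \<alpha>) / 2"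
  from Hb obtain C where HC: "\<And>a. in_D \<alpha> a \<Longrightarrow> in_D \<beta> (Hilbert_op M \<gamma> a) \<and> D_norm \<beta> (Hilbert_op M \<gamma> a) \<le> C * D_norm \<alpha> a"
    unfolding Hilbert_bounded_def by blast
  define C0 where "C0 = max C 0"
  have C0: "C0 \<ge> 0" unfolding C0_def by simp
  have Hb': "in_D \<beta> (Hilbert_op M \<gamma> a) \<and> D_norm \<beta> (Hilbert_op M \<gamma> a) \<le> C0 * D_norm \<alpha> a" if "in_D \<alpha> a" for a
  proof -
    have "D_normsq \<alpha> a \<ge> 0" using that unfolding in_D_def D_normsq_def by (intro suminf_nonneg) auto
    hence "D_norm \<alpha> a \<ge> 0" unfolding D_norm_def by simp
    hence "C * D_norm \<alpha> a \<le> C0 * D_norm \<alpha> a" unfolding C0_def by (intro mult_right_mono) auto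
    thus ?thesis using HC[OF that] by linarith
  qed
  have g0: "\<gamma> > 0" using \<gamma> by simp
  from wgt_bounds[OF g0] obtain cw Cw where wb0: "cw > 0" "\<forall>n. cw * (real n + 1) powr (\<gamma> - 1) \<le> wgt \<gamma> n \<and> wgt \<gamma> n \<le> Cw * (real n + 1) powr (\<gamma> - 1)"
    by blast
  have wl: "\<And>n. cw * (real n + 1) powr (\<gamma> - 1) \<le> wgt \<gamma> n" using wb0(2) by blast
  define R1 where "R1 = sqrt (2 * C0\<^sup>2 / (2 powr (1 - \<beta>) * cw\<^sup>2 / 4)) * 2 powr \<bar>s\<bar> * 8 powr s"
  define mt where "mt = measure M (space M)"
  define m0 where "m0 = min 1 ((1/8) powr s)"
  have m0: "m0 > 0" unfolding m0_def by simp
  have "measure M {t..<1} / (1 - t) powr s \<le> max R1 (mt / m0)" if "t \<in> {0..<1}" for t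
  proof (cases "7/8 \<le> t")
    case True
    have "measure M {t..<1} \<le> R1 * (1 - t) powr s"
      using conv_core[OF bm \<alpha> \<beta> \<gamma> wb0(1) wl C0 Hb' True] that unfolding R1_def s_def by auto
    hence "measure M {t..<1} / (1 - t) powr s \<le> R1" using that by (simp add: pos_divide_le_eq)
    thus ?thesis by simp
  next
    case False
    interpret finite_measure M using bm_finite[OF bm] .
    have mle: "measure M {t..<1} \<le> mt" unfolding mt_def by (rule bounded_measure)
    have pm: "(1 - t) powr s \<ge> m0"
    proof (cases "s \<ge> 0")
      case True
      have "(1/8) powr s \<le> (1 - t) powr s" using True False that by (intro powr_mono2) auto
      thus ?thesis unfolding m0_def by simp
    next
      case False2: False
      have "1 powr s \<le> (1 - t) powr s" using False2 that by (intro powr_mono2') auto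
      thus ?thesis unfolding m0_def by simp
    qed
    have "measure M {t..<1} / (1 - t) powr s \<le> mt / (1 - t) powr s"
      using mle pm m0 by (intro divide_right_mono) auto
    also have "\<dots> \<le> mt / m0"
    proof (rule divide_left_mono)
      show "0 \<le> mt" unfolding mt_def by simp
      have "(1 - t) powr s > 0" using that by simp
      thus "0 < (1 - t) powr s * m0" using m0 by simp
    qed (use pm in auto)
    finally show ?thesis by simp
  qed
  thus ?thesis unfolding carleson_def s_def[symmetric] by (rule bdd_aboveI2)
qed

lemma bigO_moment:
  fixes M :: "real measure"
  assumes bm: "borel_measure_01 M" and s: "s > 0"
    and O: "(\<lambda>n. moment M n) \<in> O(\<lambda>n. real n powr (- s))"
  shows "\<exists>Cm. \<forall>m. moment M m \<le> Cm * (real m + 1) powr (- s)"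
proof -
  from O obtain c where c: "c > 0" "eventually (\<lambda>n. norm (moment M n) \<le> c * norm (real n powr (- s))) at_top"
    by (elim landau_o.bigE)
  then obtain N0 where N0: "\<And>n. n \<ge> N0 \<Longrightarrow> norm (moment M n) \<le> c * norm (real n powr (- s))"
    unfolding eventually_at_top_linorder by blast
  define N1 where "N1 = max N0 1"
  define mt where "mt = measure M (space M)"
  define Cm where "Cm = max (c * 2 powr s) (mt * (real N1 + 1) powr s)"
  have "moment M m \<le> Cm * (real m + 1) powr (- s)" for m
  proof (cases "m \<ge> N1")
    case True
    hence m1: "m \<ge> 1" "m \<ge> N0" unfolding N1_def by auto
    have "moment M m \<le> c * real m powr (- s)" using N0[OF m1(2)] moment_nonneg[OF bm, of m] by simp
    also have "real m powr (- s) \<le> 2 powr s * (real m + 1) powr (- s)"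
    proof -
      have "(2 * real m) powr (- s) \<le> (real m + 1) powr (- s)" using m1 s by (intro powr_mono2') auto
      hence "2 powr (- s) * real m powr (- s) \<le> (real m + 1) powr (- s)" by (simp add: powr_mult)
      hence "2 powr s * (2 powr (- s) * real m powr (- s)) \<le> 2 powr s * (real m + 1) powr (- s)"
        by (intro mult_left_mono) auto
      thus ?thesis by (simp add: powr_minus field_simps)
    qed
    hence "c * real m powr (- s) \<le> c * (2 powr s * (real m + 1) powr (- s))" using c by (intro mult_left_mono) auto
    also have "\<dots> \<le> Cm * (real m + 1) powr (- s)" unfolding Cm_def by (simp add: mult.assoc[symmetric] mult_right_mono)
    finally show ?thesis .
  next
    case False
    have "moment M m \<le> mt" unfolding mt_def by (rule moment_le_total[OF bm])
    also have "mt = mt * (real N1 + 1) powr s * (real N1 + 1) powr (- s)" by (simp add: powr_minus field_simps)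
    also have "\<dots> \<le> mt * (real N1 + 1) powr s * (real m + 1) powr (- s)"
    proof (intro mult_left_mono powr_mono2')
      show "0 \<le> mt * (real N1 + 1) powr s" unfolding mt_def by simp
    qed (use False s in auto)
    also have "\<dots> \<le> Cm * (real m + 1) powr (- s)" unfolding Cm_def by (intro mult_right_mono) auto
    finally show ?thesis .
  qed
  thus ?thesis by blast
qed

theorem lemma2p3:
  fixes M :: "real measure" and \<alpha> \<beta> \<gamma> \<epsilon> :: real
  assumes "0 < \<alpha>" "\<alpha> \<le> 2" "2 \<le> \<beta>" "\<beta> < 4" "1 \<le> \<gamma>"
    and "borel_measure_01 M"
    and "\<epsilon> > 0"
    and "(\<lambda>n. moment M n) \<in> O(\<lambda>n. real n powr (- (\<alpha> / 2 + \<epsilon>)))"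
  shows "carleson (\<gamma> - (\<beta> - \<alpha>) / 2) M \<longleftrightarrow> Hilbert_bounded M \<gamma> \<alpha> \<beta>"
proof
  assume car: "carleson (\<gamma> - (\<beta> - \<alpha>) / 2) M"
  define s where "s = \<gamma> - (\<beta> - \<alpha>) / 2"
  have g0: "\<gamma> > 0" using assms by simp
  show "Hilbert_bounded M \<gamma> \<alpha> \<beta>"
  proof (cases "s > \<alpha> / 2")
    case True
    from car obtain K where K: "\<And>t. t \<in> {0..<1} \<Longrightarrow> measure M {t..<1} / (1 - t) powr s \<le> K"
      unfolding carleson_def s_def[symmetric] bdd_above_def by blast
    define K' where "K' = max K 0"
    have K': "K' \<ge> 0" unfolding K'_def by simp
    have H: "measure M {t..<1} \<le> K' * (1 - t) powr s" if "0 \<le> t" "t < 1" for t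
    proof -
      have "measure M {t..<1} / (1 - t) powr s \<le> K'" using K[of t] that unfolding K'_def by force
      thus ?thesis using that by (simp add: pos_divide_le_eq)
    qed
    have s0: "s > 0" using True assms by simp
    obtain Cm where Cm: "\<forall>m. moment M m \<le> Cm * (real m + 1) powr (- s)"
      using carleson_moment[OF assms(6) s0 K' H] by blast
    show ?thesis
      by (rule forward[OF assms(6) assms(1) g0 True, of \<beta> Cm]) (use Cm in \<open>auto simp: s_def\<close>)
  next
    case False
    have s0: "\<alpha> / 2 + \<epsilon> > 0" using assms by simp
    obtain Cm where Cm: "\<forall>m. moment M m \<le> Cm * (real m + 1) powr (- (\<alpha> / 2 + \<epsilon>))"
      using bigO_moment[OF assms(6) s0 assms(8)] by blast
    have le: "\<gamma> - (\<beta> - \<alpha>) / 2 \<le> \<alpha> / 2 + \<epsilon>" using False assms(7) unfolding s_def by linarith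
    have gt: "\<alpha> / 2 < \<alpha> / 2 + \<epsilon>" using assms(7) by simp
    show ?thesis
      by (rule forward[OF assms(6) assms(1) g0 gt le]) (use Cm in auto)
  qed
next
  assume "Hilbert_bounded M \<gamma> \<alpha> \<beta>"
  thus "carleson (\<gamma> - (\<beta> - \<alpha>) / 2) M"
    by (rule converse[OF assms(6) assms(1) assms(2) assms(3) assms(5)])
qed

end
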